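(* Let $G=(V,E)$ be a finite simple graph whose vertices operate independently, vertex $v$ with probability $p_v$, and let $q_v=1-p_v$, $\mathbf{p}=(p_v)_{v\in V}\in[0,1]^V$. Then \[ \operatorname{DRel}(G,\mathbf{p})=\sum_{J\subseteq V}(-1)^{|J|}\prod_{v\in N_G[J]}q_v. \] Moreover, if $G$ has no isolated vertices, then for any linear ordering of $V$ and any set $\mathscr{X}$ of broken neighbourhoods of $G$, \[ \operatorname{DRel}(G,\mathbf{p})=\sum_{\substack{J\subseteq V\\ J\not\supseteq X\ \forall X\in\mathscr{X}}}(-1)^{|J|}\prod_{v\in N_G[J]}q_v. \]
   Context: $\operatorname{DRel}(G,\mathbf{p})$ is the probability that the set of operating vertices is a dominating set of $G$ (every vertex not in the set is adjacent to a vertex in it); edges never fail. $N_G[J]$ is the closed neighbourhood of $J$ (vertices in $J$ or adjacent to a vertex of $J$), $N_G[v]=N_G[\{v\}]$. Given a linear ordering of $V$, a broken neighbourhood of $G$ is a set $N_G[v]\setminus\{v\}$ for a vertex $v$ with $v=\max N_G[v]$. *)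

theory Defs
  imports Complex_Main
begin

definition simple_graph :: "'a set \<Rightarrow> ('a \<times> 'a) set \<Rightarrow> bool" where
  "simple_graph V E \<longleftrightarrow> finite V \<and> E \<subseteq> V \<times> V \<and> sym E \<and> irrefl E"

definition closed_nbhd :: "'a set \<Rightarrow> ('a \<times> 'a) set \<Rightarrow> 'a set \<Rightarrow> 'a set" where
  "closed_nbhd V E J = {u \<in> V. u \<in> J \<or> (\<exists>w\<in>J. (w, u) \<in> E)}"

definition dominating_set :: "'a set \<Rightarrow> ('a \<times> 'a) set \<Rightarrow> 'a set \<Rightarrow> bool" where
  "dominating_set V E S \<longleftrightarrow> S \<subseteq> V \<and> (\<forall>v\<in>V - S. \<exists>u\<in>S. (u, v) \<in> E)"

definition DRel :: "'a set \<Rightarrow> ('a \<times> 'a) set \<Rightarrow> ('a \<Rightarrow> real) \<Rightarrow> real" where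
  "DRel V E p = (\<Sum>S | S \<subseteq> V \<and> dominating_set V E S.
      (\<Prod>v\<in>S. p v) * (\<Prod>v\<in>V - S. 1 - p v))"

definition no_isolated :: "'a set \<Rightarrow> ('a \<times> 'a) set \<Rightarrow> bool" where
  "no_isolated V E \<longleftrightarrow> (\<forall>v\<in>V. \<exists>u. (v, u) \<in> E)"

text \<open>Broken neighbourhoods w.r.t. a linear order ord on V (ord is the
  non-strict order relation: (u,v) \<in> ord means u \<le> v).\<close>
definition broken_nbhd :: "'a set \<Rightarrow> ('a \<times> 'a) set \<Rightarrow> ('a \<times> 'a) set \<Rightarrow> 'a set \<Rightarrow> bool" where
  "broken_nbhd V E ord X \<longleftrightarrow>
     (\<exists>v\<in>V. (\<forall>u\<in>closed_nbhd V E {v}. (u, v) \<in> ord) \<and> X = closed_nbhd V E {v} - {v})"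

end

theory Submission
  imports Defs
begin

lemma alt_sum:
  assumes "finite U"
  shows "(\<Sum>J\<in>Pow U. (-1::real) ^ card J) = (if U = {} then 1 else 0)"
proof -
  have "(\<Prod>x\<in>U. (1::real) - 1) = (\<Sum>X\<in>Pow U. (-1) ^ card X * (\<Prod>x\<in>X. 1) * (\<Prod>x\<in>U-X. 1))"
    by (rule prod_diff_conv_sum[OF assms])
  then show ?thesis using assms by (cases "U = {}") (auto simp: power_0_left card_eq_0_iff)
qed

lemma prod_q:
  fixes p :: "'a \<Rightarrow> real"
  assumes "finite V" "A \<subseteq> V"
  shows "(\<Prod>v\<in>A. 1 - p v) = (\<Sum>S\<in>Pow (V - A). (\<Prod>v\<in>S. p v) * (\<Prod>v\<in>V - S. 1 - p v))"
proof -
  have fin: "finite (V - A)" using assms by auto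
  have "(1::real) = (\<Prod>x\<in>V - A. p x + (1 - p x))" by simp
  also have "\<dots> = (\<Sum>S\<in>Pow (V - A). (\<Prod>x\<in>S. p x) * (\<Prod>x\<in>V - A - S. 1 - p x))"
    by (rule prod_add[OF fin])
  finally have 1: "(1::real) = \<dots>" .
  have "(\<Prod>v\<in>A. 1 - p v) = (\<Sum>S\<in>Pow (V - A). (\<Prod>x\<in>S. p x) * (\<Prod>x\<in>V - A - S. 1 - p x)) * (\<Prod>v\<in>A. 1 - p v)"
    using 1 by simp
  also have "\<dots> = (\<Sum>S\<in>Pow (V - A). (\<Prod>v\<in>S. p v) * (\<Prod>v\<in>V - S. 1 - p v))"
    unfolding sum_distrib_right
  proof (rule sum.cong[OF refl])
    fix S assume S: "S \<in> Pow (V - A)"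
    have eq: "V - S = (V - A - S) \<union> A" using S assms by auto
    have "(\<Prod>v\<in>V - S. 1 - p v) = (\<Prod>x\<in>V - A - S. 1 - p x) * (\<Prod>v\<in>A. 1 - p v)"
      unfolding eq using assms by (intro prod.union_disjoint) (auto intro: finite_subset)
    then show "(\<Prod>x\<in>S. p x) * (\<Prod>x\<in>V - A - S. 1 - p x) * (\<Prod>v\<in>A. 1 - p v) =
      (\<Prod>v\<in>S. p v) * (\<Prod>v\<in>V - S. 1 - p v)" by simp
  qed
  finally show ?thesis .
qed

lemma part1:
  fixes V :: "'a set" and E :: "('a \<times> 'a) set" and p :: "'a \<Rightarrow> real"
  assumes sg: "simple_graph V E"
  shows "DRel V E p = (\<Sum>J | J \<subseteq> V. (-1) ^ card J * (\<Prod>v\<in>closed_nbhd V E J. 1 - p v))"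
proof -
  have fin: "finite V" and EV: "E \<subseteq> V \<times> V" and sy: "sym E" using sg unfolding simple_graph_def by auto
  define N where "N = closed_nbhd V E"
  define w where "w = (\<lambda>S. (\<Prod>v\<in>S. p v) * (\<Prod>v\<in>V - S. 1 - p v))"
  define U where "U = (\<lambda>S. {v\<in>V. S \<inter> N {v} = {}})"
  have NV: "N J \<subseteq> V" for J unfolding N_def closed_nbhd_def by auto
  have key: "S \<inter> N J = {} \<longleftrightarrow> J \<subseteq> U S" if "J \<subseteq> V" for S J
    using that unfolding U_def N_def closed_nbhd_def by auto
  have dom: "U S = {} \<longleftrightarrow> dominating_set V E S" if "S \<subseteq> V" for S
    using that sy unfolding U_def N_def closed_nbhd_def dominating_set_def sym_def by blast
  have PV: "{J. J \<subseteq> V} = Pow V" by auto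
  have "(\<Sum>J | J \<subseteq> V. (-1) ^ card J * (\<Prod>v\<in>N J. 1 - p v))
     = (\<Sum>J\<in>Pow V. (-1) ^ card J * (\<Sum>S\<in>Pow (V - N J). w S))"
    unfolding PV w_def using prod_q[OF fin NV] by simp
  also have "\<dots> = (\<Sum>J\<in>Pow V. \<Sum>S\<in>Pow V. if S \<inter> N J = {} then (-1) ^ card J * w S else 0)"
  proof (rule sum.cong[OF refl])
    fix J assume "J \<in> Pow V"
    have "Pow (V - N J) = {S \<in> Pow V. S \<inter> N J = {}}" by auto
    then have "(\<Sum>S\<in>Pow (V - N J). w S) = (\<Sum>S\<in>{S \<in> Pow V. S \<inter> N J = {}}. w S)" by simp
    also have "\<dots> = (\<Sum>S\<in>Pow V. if S \<inter> N J = {} then w S else 0)"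
      by (rule sum.inter_filter) (simp add: fin)
    finally show "(-1) ^ card J * (\<Sum>S\<in>Pow (V - N J). w S) =
      (\<Sum>S\<in>Pow V. if S \<inter> N J = {} then (-1) ^ card J * w S else 0)"
      by (simp add: sum_distrib_left if_distrib cong: if_cong)
  qed
  also have "\<dots> = (\<Sum>S\<in>Pow V. \<Sum>J\<in>Pow V. if S \<inter> N J = {} then (-1) ^ card J * w S else 0)"
    by (rule sum.swap)
  also have "\<dots> = (\<Sum>S\<in>Pow V. w S * (if U S = {} then 1 else 0))"
  proof (rule sum.cong[OF refl])
    fix S assume S: "S \<in> Pow V"
    have UV: "U S \<subseteq> V" unfolding U_def by auto
    have "{J \<in> Pow V. S \<inter> N J = {}} = Pow (U S)" using key UV by auto
    then have "(\<Sum>J\<in>Pow V. if S \<inter> N J = {} then (-1) ^ card J * w S else 0)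
       = (\<Sum>J\<in>Pow (U S). (-1) ^ card J * w S)"
      using fin by (simp add: sum.inter_filter[symmetric])
    also have "\<dots> = w S * (\<Sum>J\<in>Pow (U S). (-1) ^ card J)"
      by (simp add: sum_distrib_left mult.commute)
    also have "\<dots> = w S * (if U S = {} then 1 else 0)"
      using alt_sum[of "U S"] UV fin finite_subset by metis
    finally show "(\<Sum>J\<in>Pow V. if S \<inter> N J = {} then (-1) ^ card J * w S else 0) = \<dots>" .
  qed
  also have "\<dots> = (\<Sum>S\<in>Pow V. if dominating_set V E S then w S else 0)"
    using dom by (intro sum.cong) auto
  also have "\<dots> = (\<Sum>S\<in>{S \<in> Pow V. dominating_set V E S}. w S)"
    by (rule sum.inter_filter[symmetric]) (simp add: fin)
  also have "\<dots> = DRel V E p"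
    unfolding DRel_def w_def by (rule sum.cong) auto
  finally show ?thesis unfolding N_def by simp
qed

lemma cancel:
  fixes V :: "'a set" and E :: "('a \<times> 'a) set" and p :: "'a \<Rightarrow> real"
  assumes sg: "simple_graph V E" and v: "v \<in> V"
    and X: "X = closed_nbhd V E {v} - {v}" and Xne: "X \<noteq> {}"
    and Y: "\<forall>Y\<in>\<Y>. v \<notin> Y"
  shows "(\<Sum>J | J \<subseteq> V \<and> (\<forall>Y\<in>\<Y>. \<not> Y \<subseteq> J) \<and> X \<subseteq> J.
      (-1) ^ card J * (\<Prod>u\<in>closed_nbhd V E J. 1 - p u)) = 0"
proof -
  have fin: "finite V" and sy: "sym E" using sg unfolding simple_graph_def by auto
  define f where "f = (\<lambda>J. (-1::real) ^ card J * (\<Prod>u\<in>closed_nbhd V E J. 1 - p u))"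
  define A where "A = {J. J \<subseteq> V \<and> (\<forall>Y\<in>\<Y>. \<not> Y \<subseteq> J) \<and> X \<subseteq> J \<and> v \<notin> J}"
  have vX: "v \<notin> X" using X by auto
  have setEq: "{J. J \<subseteq> V \<and> (\<forall>Y\<in>\<Y>. \<not> Y \<subseteq> J) \<and> X \<subseteq> J} = A \<union> insert v ` A"
  proof (rule set_eqI, rule iffI)
    fix J assume J: "J \<in> {J. J \<subseteq> V \<and> (\<forall>Y\<in>\<Y>. \<not> Y \<subseteq> J) \<and> X \<subseteq> J}"
    show "J \<in> A \<union> insert v ` A"
    proof (cases "v \<in> J")
      case True
      have "J - {v} \<in> A" using J vX unfolding A_def by auto
      moreover have "J = insert v (J - {v})" using True by auto
      ultimately show ?thesis by blast
    next
      case False then show ?thesis using J unfolding A_def by auto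
    qed
  next
    fix J assume "J \<in> A \<union> insert v ` A"
    then show "J \<in> {J. J \<subseteq> V \<and> (\<forall>Y\<in>\<Y>. \<not> Y \<subseteq> J) \<and> X \<subseteq> J}"
      using Y v unfolding A_def by (auto simp: subset_insert)
  qed
  have finA: "finite A" unfolding A_def using fin by (rule rev_finite_subset[OF finite_Pow_iff[THEN iffD2]]) auto
  have disj: "A \<inter> insert v ` A = {}" unfolding A_def by auto
  have inj: "inj_on (insert v) A" unfolding A_def inj_on_def by auto
  have neg: "f (insert v J) = - f J" if J: "J \<in> A" for J
  proof -
    have JV: "J \<subseteq> V" "X \<subseteq> J" "v \<notin> J" using J unfolding A_def by auto
    have fJ: "finite J" using JV fin finite_subset by auto
    obtain x where x: "x \<in> X" using Xne by auto
    have "(v, x) \<in> E" using x X by (auto simp: closed_nbhd_def)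
    then have "(x, v) \<in> E" using sy by (auto simp: sym_def)
    then have "closed_nbhd V E (insert v J) = closed_nbhd V E J"
      using JV x X v unfolding closed_nbhd_def by blast
    then show ?thesis unfolding f_def using fJ JV by simp
  qed
  have "(\<Sum>J | J \<subseteq> V \<and> (\<forall>Y\<in>\<Y>. \<not> Y \<subseteq> J) \<and> X \<subseteq> J. f J) = sum f A + sum f (insert v ` A)"
    unfolding setEq using finA disj by (intro sum.union_disjoint) auto
  also have "sum f (insert v ` A) = (\<Sum>J\<in>A. f (insert v J))"
    using inj by (simp add: sum.reindex)
  also have "\<dots> = (\<Sum>J\<in>A. - f J)" using neg by (intro sum.cong) auto
  finally show ?thesis unfolding f_def by (simp add: sum_negf)
qed

lemma part2:
  fixes V :: "'a set" and E :: "('a \<times> 'a) set" and p :: "'a \<Rightarrow> real"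
  assumes sg: "simple_graph V E" and ni: "no_isolated V E" and lo: "linear_order_on V ord"
    and fX: "finite \<X>" and bX: "\<forall>X\<in>\<X>. broken_nbhd V E ord X"
  shows "(\<Sum>J | J \<subseteq> V \<and> (\<forall>X\<in>\<X>. \<not> X \<subseteq> J).
      (-1) ^ card J * (\<Prod>v\<in>closed_nbhd V E J. 1 - p v))
    = (\<Sum>J | J \<subseteq> V. (-1) ^ card J * (\<Prod>v\<in>closed_nbhd V E J. 1 - p v))"
  using fX bX
proof (induction \<X> rule: finite_induct)
  case empty
  then show ?case by simp
next
  case (insert X \<X>)
  have fin: "finite V" and sy: "sym E" and EV: "E \<subseteq> V \<times> V" and irr: "irrefl E"
    using sg unfolding simple_graph_def by auto
  have anti: "antisym ord" using lo unfolding linear_order_on_def partial_order_on_def by auto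
  define f where "f = (\<lambda>J. (-1::real) ^ card J * (\<Prod>u\<in>closed_nbhd V E J. 1 - p u))"
  obtain v where v: "v \<in> V" and vmax: "\<forall>u\<in>closed_nbhd V E {v}. (u, v) \<in> ord"
    and Xv: "X = closed_nbhd V E {v} - {v}"
    using insert.prems unfolding broken_nbhd_def by auto
  obtain u where "(v, u) \<in> E" using ni v unfolding no_isolated_def by auto
  then have "u \<in> X" using Xv EV irr by (auto simp: closed_nbhd_def irrefl_def)
  then have Xne: "X \<noteq> {}" by auto
  have Ynot: "\<forall>Y\<in>\<X>. v \<notin> Y"
  proof
    fix Y assume "Y \<in> \<X>"
    then obtain w where w: "w \<in> V" and wmax: "\<forall>u\<in>closed_nbhd V E {w}. (u, w) \<in> ord"
      and Yw: "Y = closed_nbhd V E {w} - {w}"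
      using insert.prems unfolding broken_nbhd_def by auto
    show "v \<notin> Y"
    proof
      assume "v \<in> Y"
      then have vw: "(w, v) \<in> E" "v \<noteq> w" using Yw by (auto simp: closed_nbhd_def)
      have "(v, w) \<in> ord" using \<open>v \<in> Y\<close> Yw wmax by auto
      moreover have "(v, w) \<in> E" using vw sy by (auto simp: sym_def)
      then have "(w, v) \<in> ord" using vmax w by (auto simp: closed_nbhd_def)
      ultimately show False using anti vw(2) by (auto dest: antisymD)
    qed
  qed
  have split: "{J. J \<subseteq> V \<and> (\<forall>Y\<in>\<X>. \<not> Y \<subseteq> J)}
     = {J. J \<subseteq> V \<and> (\<forall>Y\<in>insert X \<X>. \<not> Y \<subseteq> J)} \<union> {J. J \<subseteq> V \<and> (\<forall>Y\<in>\<X>. \<not> Y \<subseteq> J) \<and> X \<subseteq> J}"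
    by auto
  have finP: "finite {J. J \<subseteq> V \<and> Q J}" for Q using fin by (rule rev_finite_subset[OF finite_Pow_iff[THEN iffD2]]) auto
  have "(\<Sum>J | J \<subseteq> V \<and> (\<forall>Y\<in>\<X>. \<not> Y \<subseteq> J). f J)
     = (\<Sum>J | J \<subseteq> V \<and> (\<forall>Y\<in>insert X \<X>. \<not> Y \<subseteq> J). f J)
       + (\<Sum>J | J \<subseteq> V \<and> (\<forall>Y\<in>\<X>. \<not> Y \<subseteq> J) \<and> X \<subseteq> J. f J)"
    unfolding split by (rule sum.union_disjoint) (auto intro: finP[simplified])
  also have "(\<Sum>J | J \<subseteq> V \<and> (\<forall>Y\<in>\<X>. \<not> Y \<subseteq> J) \<and> X \<subseteq> J. f J) = 0"
    unfolding f_def by (rule cancel[OF sg v Xv Xne Ynot])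
  finally show ?case using insert.IH insert.prems unfolding f_def by simp
qed

theorem theorem4:
  fixes V :: "'a set" and E :: "('a \<times> 'a) set" and p :: "'a \<Rightarrow> real"
  assumes "simple_graph V E"
    and "\<forall>v\<in>V. 0 \<le> p v \<and> p v \<le> 1"
  shows "DRel V E p = (\<Sum>J | J \<subseteq> V. (-1) ^ card J * (\<Prod>v\<in>closed_nbhd V E J. 1 - p v))
    \<and> (no_isolated V E \<longrightarrow>
         (\<forall>(ord :: ('a \<times> 'a) set) (\<X> :: 'a set set).
           linear_order_on V ord \<longrightarrow> (\<forall>X\<in>\<X>. broken_nbhd V E ord X) \<longrightarrow>
           DRel V E p = (\<Sum>J | J \<subseteq> V \<and> (\<forall>X\<in>\<X>. \<not> X \<subseteq> J).
              (-1) ^ card J * (\<Prod>v\<in>closed_nbhd V E J. 1 - p v))))"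
proof -
  have fin: "finite V" using assms(1) unfolding simple_graph_def by auto
  show ?thesis
  proof (intro conjI impI allI)
    show "DRel V E p = (\<Sum>J | J \<subseteq> V. (-1) ^ card J * (\<Prod>v\<in>closed_nbhd V E J. 1 - p v))"
      by (rule part1[OF assms(1)])
    fix ord :: "('a \<times> 'a) set" and \<X> :: "'a set set"
    assume ni: "no_isolated V E" and lo: "linear_order_on V ord"
      and bX: "\<forall>X\<in>\<X>. broken_nbhd V E ord X"
    have "\<X> \<subseteq> Pow V" using bX unfolding broken_nbhd_def closed_nbhd_def by auto
    then have fX: "finite \<X>" using fin by (meson finite_Pow_iff finite_subset)
    show "DRel V E p = (\<Sum>J | J \<subseteq> V \<and> (\<forall>X\<in>\<X>. \<not> X \<subseteq> J).
              (-1) ^ card J * (\<Prod>v\<in>closed_nbhd V E J. 1 - p v))"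
      using part1[OF assms(1)] part2[OF assms(1) ni lo fX bX] by simp
  qed
qed

end
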